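(* Setting and construction as in the context. Assume that for every $t\in[0,T]$ the set $\mathbb{W}(t)=B(t)\mathbb{U}\ominus(-E(t)\mathbb{D})$ is nonempty. Let $g\in C(\mathbb{R}^n;\mathbb{R})$, $L_g\ge 0$, $N\in\mathbb{N}$, levels $\gamma_1,\dots,\gamma_N\in g(\mathbb{R}^n)$, integers $n_k\in\mathbb{N}$, points $\bar x_{i,k}\in g^{-1}(\{\gamma_k\})$ ($1\le i\le n_k$), and controls $\omega_{i,k}\in\mathscr{W}[0,T]$ be given, and let $$\bar v(t,x)=\min_{k\in\{1,\dots,N\}}\Big(L_g\inf_{\xi\in\Omega^\star_k(t)}\|\Phi_A(T,t)(x-\xi)\|+\gamma_k\Big),\qquad \Omega^\star_k(t)=\mathrm{conv}\big(\{\xi^\star_{i,k}(t)\}_{i=1}^{n_k}\big),$$ where $\xi^\star_{i,k}$ is the solution on $[0,T]$ of $\dot\xi(s)=A(s)\xi(s)+\omega_{i,k}(s)$ a.e., $\xi(T)=\bar x_{i,k}$. Then $\bar v$ is a continuous viscosity supersolution of $-v_t(t,x)+H(t,x,\nabla v(t,x))=0$ on $(0,T)\times\mathbb{R}^n$, where $H(t,x,p)=\max_{u\in\mathbb{U}}\min_{d\in\mathbb{D}}\langle -p,A(t)x+B(t)u+E(t)d\rangle$.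
   Context: Fix $T>0$ and integers $n,m,\ell\ge 1$. Let $A\in C([0,T];\mathbb{R}^{n\times n})$, $B\in C([0,T];\mathbb{R}^{n\times m})$, $E\in C([0,T];\mathbb{R}^{n\times \ell})$, and let $\mathbb{U}\subset\mathbb{R}^m$, $\mathbb{D}\subset\mathbb{R}^\ell$ be compact, convex and nonempty. $\Phi_A(s,\tau)$ denotes the state-transition matrix of $\dot y(s)=A(s)y(s)$. For sets $Y,Z\subseteq\mathbb{R}^n$: $Y\oplus Z=\{y+z: y\in Y,z\in Z\}$, $Y\ominus Z=\{c\in\mathbb{R}^n:\{c\}\oplus Z\subseteq Y\}$, and for a matrix $P$, $PY=\{Py:y\in Y\}$. For $0\le t\le T$, $\mathscr{W}[t,T]$ is the set of measurable $\omega:[t,T]\to\mathbb{R}^n$ with $\omega(s)\in\mathbb{W}(s)$ for all $s\in[t,T]$. For $(t_0,x_0)\in(0,T)\times\mathbb{R}^n$ and continuous $f$ on $[0,T]\times\mathbb{R}^n$, the subdifferential $D^-f(t_0,x_0)$ (resp. superdifferential $D^+f(t_0,x_0)$) is the set of $(q,p)\in\mathbb{R}\times\mathbb{R}^n$ with $\liminf_{(t,x)\to(t_0,x_0)}\frac{f(t,x)-f(t_0,x_0)-\langle (q,p),(t,x)-(t_0,x_0)\rangle}{\|(t,x)-(t_0,x_0)\|}\ge 0$ (resp. $\limsup\ldots\le 0$). A continuous $f$ is a viscosity supersolution (resp. subsolution) of $-v_t+H(t,x,\nabla v)=0$ on $(0,T)\times\mathbb{R}^n$ if for all $(t_0,x_0)\in(0,T)\times\mathbb{R}^n$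 and all $(q,p)\in D^-f(t_0,x_0)$ (resp. $D^+f(t_0,x_0)$), $-q+H(t_0,x_0,p)\ge 0$ (resp. $\le 0$); it is a viscosity solution if it is both. *)

theory Defs
  imports "HOL-Analysis.Analysis"
begin

definition mink_diff :: "'a::ab_group_add set \<Rightarrow> 'a set \<Rightarrow> 'a set" where
  "mink_diff Y Z = {c. (\<lambda>z. c + z) ` Z \<subseteq> Y}"

definition Wset :: "(real \<Rightarrow> real^'m^'n) \<Rightarrow> (real \<Rightarrow> real^'l^'n) \<Rightarrow> (real^'m) set
    \<Rightarrow> (real^'l) set \<Rightarrow> real \<Rightarrow> (real^'n) set" where
  "Wset B E U D t = mink_diff ((\<lambda>u. B t *v u) ` U) ((\<lambda>d. - (E t *v d)) ` D)"

definition admissible :: "(real \<Rightarrow> (real^'n) set) \<Rightarrow> real \<Rightarrow> real \<Rightarrow> (real \<Rightarrow> real^'n) \<Rightarrow> bool" where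
  "admissible W t T \<omega> \<longleftrightarrow> \<omega> measurable_on {t..T} \<and> (\<forall>s\<in>{t..T}. \<omega> s \<in> W s)"

definition state_transition :: "(real \<Rightarrow> real^'n^'n) \<Rightarrow> real \<Rightarrow> (real \<Rightarrow> real \<Rightarrow> real^'n^'n) \<Rightarrow> bool" where
  "state_transition A T Phi \<longleftrightarrow>
     (\<forall>\<tau>\<in>{0..T}. Phi \<tau> \<tau> = mat 1 \<and>
        (\<forall>s\<in>{0..T}. ((\<lambda>s. Phi s \<tau>) has_vector_derivative (A s ** Phi s \<tau>)) (at s within {0..T})))"

definition hamiltonian :: "(real \<Rightarrow> real^'n^'n) \<Rightarrow> (real \<Rightarrow> real^'m^'n) \<Rightarrow> (real \<Rightarrow> real^'l^'n)
    \<Rightarrow> (real^'m) set \<Rightarrow> (real^'l) set \<Rightarrow> real \<Rightarrow> real^'n \<Rightarrow> real^'n \<Rightarrow> real" where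
  "hamiltonian A B E U D t x p =
     (SUP u\<in>U. INF d\<in>D. (- p) \<bullet> (A t *v x + B t *v u + E t *v d))"

text \<open>Subdifferential D^- f(t0,x0): liminf of the difference quotient is >= 0 (written out).\<close>
definition subdiff :: "(real \<Rightarrow> 'a::real_inner \<Rightarrow> real) \<Rightarrow> real \<Rightarrow> 'a \<Rightarrow> (real \<times> 'a) set" where
  "subdiff f t0 x0 = {(q, p). \<forall>\<epsilon>>0. \<exists>\<delta>>0. \<forall>t x.
      0 < norm ((t, x) - (t0, x0)) \<and> norm ((t, x) - (t0, x0)) < \<delta> \<longrightarrow>
      f t x - f t0 x0 - (q * (t - t0) + p \<bullet> (x - x0)) \<ge> - \<epsilon> * norm ((t, x) - (t0, x0))}"

definition visc_supersolution :: "real \<Rightarrow> (real \<Rightarrow> 'a::real_inner \<Rightarrow> 'a \<Rightarrow> real) \<Rightarrow> (real \<Rightarrow> 'a \<Rightarrow> real) \<Rightarrow> bool" where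
  "visc_supersolution T H f \<longleftrightarrow>
     (\<forall>t0 x0 q p. 0 < t0 \<and> t0 < T \<and> (q, p) \<in> subdiff f t0 x0 \<longrightarrow> - q + H t0 x0 p \<ge> 0)"

end

theory Submission
  imports Defs
begin

lemma norm_sq_vec: "(norm (x::real^'n))^2 = (\<Sum>i\<in>UNIV. (x$i)^2)"
  by (simp add: norm_vec_def L2_set_def sum_nonneg)
lemma norm_sq_mat: "(norm (x::real^'n^'m))^2 = (\<Sum>i\<in>UNIV. (norm (x$i))^2)"
  by (simp add: norm_vec_def L2_set_def sum_nonneg)
lemma norm_mv: "norm ((A::real^'n^'m) *v x) \<le> norm A * norm x"
proof -
  have "(norm (A *v x))^2 = (\<Sum>i\<in>UNIV. (A$i \<bullet> x)^2)"
    by (simp add: norm_sq_vec matrix_vector_mult_def inner_vec_def mult.commute)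
  also have "\<dots> \<le> (\<Sum>i\<in>UNIV. (norm (A$i))^2 * (norm x)^2)"
  proof (rule sum_mono)
    fix i
    have "\<bar>A$i \<bullet> x\<bar> \<le> norm (A$i) * norm x" by (rule Cauchy_Schwarz_ineq2)
    then show "(A$i \<bullet> x)^2 \<le> (norm (A$i))^2 * (norm x)^2"
      by (metis abs_ge_zero power2_abs power_mono power_mult_distrib)
  qed
  also have "\<dots> = (norm A * norm x)^2"
    by (simp add: norm_sq_mat power_mult_distrib sum_distrib_right)
  finally show ?thesis
    by (meson mult_nonneg_nonneg norm_ge_zero power2_le_imp_le)
qed
lemma norm_transpose: "norm (transpose (A::real^'n^'m)) = norm A"
proof -
  have "(norm (transpose A))^2 = (norm A)^2"
    unfolding norm_sq_mat norm_sq_vec transpose_def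
    by (simp, rule sum.swap)
  then show ?thesis by (simp add: power2_eq_iff_nonneg)
qed
lemma norm_mm: "norm ((A::real^'n^'m) ** (B::real^'k^'n)) \<le> norm A * norm B"
proof -
  have row: "(A ** B)$i = transpose B *v (A$i)" for i
    by (simp add: matrix_matrix_mult_def matrix_vector_mult_def transpose_def vec_eq_iff mult.commute)
  have "(norm (A ** B))^2 = (\<Sum>i\<in>UNIV. (norm (transpose B *v (A$i)))^2)"
    by (simp add: norm_sq_mat row)
  also have "\<dots> \<le> (\<Sum>i\<in>UNIV. (norm B)^2 * (norm (A$i))^2)"
  proof (rule sum_mono)
    fix i
    show "(norm (transpose B *v (A$i)))^2 \<le> (norm B)^2 * (norm (A$i))^2"
      using norm_mv[of "transpose B" "A$i"] norm_transpose[of B]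
      by (metis norm_ge_zero power_mono power_mult_distrib)
  qed
  also have "\<dots> = (norm B)^2 * (norm A)^2"
    by (simp add: norm_sq_mat sum_distrib_left)
  also have "\<dots> = (norm A * norm B)^2"
    by (simp add: power_mult_distrib)
  finally show ?thesis
    by (meson mult_nonneg_nonneg norm_ge_zero power2_le_imp_le)
qed
lemma ode_local_bound:
  fixes Z :: "real \<Rightarrow> 'a::banach"
  assumes der: "\<forall>s\<in>{0..T}. (Z has_vector_derivative Z' s) (at s within {0..T})"
    and bnd: "\<forall>s\<in>I. norm (Z' s) \<le> C" and C: "C \<ge> 0"
    and I: "{a..b} \<subseteq> {0..T}" "{a..b} \<subseteq> I"
    and ab: "a \<le> b"
  shows "norm (Z b - Z a) \<le> C * (b - a)"
proof -
  have "\<And>x. x \<in> {a..b} \<Longrightarrow> (Z has_vector_derivative Z' x) (at x within {a..b})"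
    using der I by (meson has_vector_derivative_within_subset subsetD)
  then have "(Z' has_integral (Z b - Z a)) {a..b}"
    using fundamental_theorem_of_calculus ab by blast
  moreover have "\<forall>x\<in>{a..b}. norm (Z' x) \<le> C" using bnd I by blast
  ultimately show ?thesis
    using has_integral_bound[of C Z' "Z b - Z a" a b] C ab by auto
qed

lemma lin_ode_unique:
  fixes A :: "real \<Rightarrow> real^'n^'n" and Z :: "real \<Rightarrow> real^'k^'n"
  assumes Ac: "continuous_on {0..T} A"
    and der: "\<forall>s\<in>{0..T}. (Z has_vector_derivative (A s ** Z s)) (at s within {0..T})"
    and sig: "\<sigma> \<in> {0..T}" "Z \<sigma> = 0"
  shows "\<forall>s\<in>{0..T}. Z s = 0"
proof -
  have "bounded (A ` {0..T})" using Ac compact_Icc compact_continuous_image compact_imp_bounded by blast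
  then obtain M where M: "M > 0" "\<forall>s\<in>{0..T}. norm (A s) \<le> M"
    unfolding bounded_pos by auto
  define \<delta> where "\<delta> = 1 / (2*M)"
  have dpos: "\<delta> > 0" using M by (simp add: \<delta>_def)
  have Zc: "continuous_on {0..T} Z"
    using der by (meson continuous_on_eq_continuous_within has_vector_derivative_continuous)
  have local: "Z s = 0" if s0: "s0 \<in> {0..T}" "Z s0 = 0" and s: "s \<in> {0..T}" "\<bar>s - s0\<bar> \<le> \<delta>" for s0 s
  proof -
    define I where "I = {max 0 (s0-\<delta>) .. min T (s0+\<delta>)}"
    have s0I: "s0 \<in> I" using s0 dpos by (auto simp: I_def)
    have IT: "I \<subseteq> {0..T}" by (auto simp: I_def)
    have "continuous_on I (\<lambda>r. norm (Z r))"
      using Zc IT continuous_on_subset continuous_on_norm by blast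
    then obtain s1 where s1: "s1 \<in> I" "\<forall>r\<in>I. norm (Z r) \<le> norm (Z s1)"
      using continuous_attains_sup[of I "\<lambda>r. norm (Z r)"] s0I unfolding I_def by auto
    define S where "S = norm (Z s1)"
    have bnd: "\<forall>r\<in>I. norm (A r ** Z r) \<le> M * S"
    proof
      fix r assume r: "r \<in> I"
      have "norm (A r ** Z r) \<le> norm (A r) * norm (Z r)" by (rule norm_mm)
      also have "\<dots> \<le> M * S"
        using M r IT s1 by (auto simp: S_def intro!: mult_mono)
      finally show "norm (A r ** Z r) \<le> M * S" .
    qed
    have MS: "M * S \<ge> 0" using M by (simp add: S_def)
    have key: "norm (Z r) \<le> S / 2" if r: "r \<in> I" for r
    proof (cases "s0 \<le> r")
      case True
      have "{s0..r} \<subseteq> I" using r s0I by (auto simp: I_def)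
      then have "norm (Z r - Z s0) \<le> M * S * (r - s0)"
        using ode_local_bound[OF der bnd MS _ _ True] IT by blast
      also have "\<dots> \<le> M * S * \<delta>" using r True MS by (intro mult_left_mono) (auto simp: I_def)
      also have "\<dots> = S / 2" using M by (simp add: \<delta>_def)
      finally show ?thesis using s0 by simp
    next
      case False
      have "{r..s0} \<subseteq> I" using r s0I by (auto simp: I_def)
      moreover have "0 \<le> r" "s0 \<le> T" using r s0I IT by (auto simp: I_def)
      ultimately have "norm (Z s0 - Z r) \<le> M * S * (s0 - r)"
        using ode_local_bound[OF der bnd MS, of r s0] False by auto
      also have "\<dots> \<le> M * S * \<delta>" using r False MS by (intro mult_left_mono) (auto simp: I_def)
      also have "\<dots> = S / 2" using M by (simp add: \<delta>_def)
      finally show ?thesis using s0 by simp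
    qed
    have "S \<le> S / 2" using key[OF s1(1)] by (simp add: S_def)
    then have "S = 0" by (simp add: S_def)
    moreover have "s \<in> I" using s by (auto simp: I_def)
    ultimately show ?thesis using s1 S_def by auto
  qed
  have ind: "\<forall>s\<in>{0..T}. \<bar>s - \<sigma>\<bar> \<le> real n * \<delta> \<longrightarrow> Z s = 0" for n
  proof (induction n)
    case 0
    then show ?case using sig by auto
  next
    case (Suc n)
    show ?case
    proof (intro ballI impI)
      fix s assume s: "s \<in> {0..T}" "\<bar>s - \<sigma>\<bar> \<le> real (Suc n) * \<delta>"
      define s0 where "s0 = (if s > \<sigma> then max \<sigma> (s - \<delta>) else min \<sigma> (s + \<delta>))"
      have s0T: "s0 \<in> {0..T}" using s sig dpos by (auto simp: s0_def)
      have "\<bar>s0 - \<sigma>\<bar> \<le> real n * \<delta>" using s dpos using mult_nonneg_nonneg[of "real n" \<delta>] by (auto simp: s0_def algebra_simps min_def max_def)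
      then have "Z s0 = 0" using Suc s0T by blast
      moreover have "\<bar>s - s0\<bar> \<le> \<delta>" using dpos by (auto simp: s0_def)
      ultimately show "Z s = 0" using local[OF s0T _ s(1)] by blast
    qed
  qed
  obtain n where n: "T / \<delta> \<le> real n" using real_arch_simple by blast
  show ?thesis
  proof
    fix s assume s: "s \<in> {0..T}"
    have "\<bar>s - \<sigma>\<bar> \<le> T" using s sig by auto
    also have "T \<le> real n * \<delta>" using n dpos by (simp add: field_simps)
    finally show "Z s = 0" using ind s by blast
  qed
qed
lemma bl_mm: "bounded_linear (\<lambda>M::real^'n^'m. M ** (C::real^'k^'n))"
proof (rule bounded_linear_intro[where K="norm C"])
  show "\<And>x y. (x + y) ** C = x ** C + y ** C"
    by (simp add: matrix_matrix_mult_def vec_eq_iff algebra_simps sum.distrib)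
  show "\<And>r x. (r *\<^sub>R x) ** C = r *\<^sub>R (x ** C)"
    by (simp add: matrix_matrix_mult_def vec_eq_iff algebra_simps sum_distrib_left)
  show "\<And>x. norm (x ** C) \<le> norm x * norm C" by (rule norm_mm)
qed

lemma bl_mv: "bounded_linear (\<lambda>M::real^'n^'m. M *v (c::real^'n))"
proof (rule bounded_linear_intro[where K="norm c"])
  show "\<And>x y. (x + y) *v c = x *v c + y *v c"
    by (simp add: matrix_vector_mult_def vec_eq_iff algebra_simps sum.distrib)
  show "\<And>r x. (r *\<^sub>R x) *v c = r *\<^sub>R (x *v c)"
    by (simp add: matrix_vector_mult_def vec_eq_iff algebra_simps sum_distrib_left)
  show "\<And>x. norm (x *v c) \<le> norm x * norm c" by (rule norm_mv)
qed

lemma mm_diff_ldistrib: "(A::real^'n^'m) ** X - A ** Y = A ** (X - (Y::real^'k^'n))"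
  by (simp add: matrix_matrix_mult_def vec_eq_iff algebra_simps sum_subtractf)

lemma cocycle:
  fixes A :: "real \<Rightarrow> real^'n^'n" and Phi :: "real \<Rightarrow> real \<Rightarrow> real^'n^'n"
  assumes Ac: "continuous_on {0..T} A" and Phi: "state_transition A T Phi"
    and s: "s \<in> {0..T}" and sig: "\<sigma> \<in> {0..T}" and tau: "\<tau> \<in> {0..T}"
  shows "Phi s \<sigma> ** Phi \<sigma> \<tau> = Phi s \<tau>"
proof -
  define Z where "Z r = Phi r \<sigma> ** Phi \<sigma> \<tau> - Phi r \<tau>" for r
  have "\<forall>r\<in>{0..T}. (Z has_vector_derivative (A r ** Z r)) (at r within {0..T})"
  proof
    fix r assume r: "r \<in> {0..T}"
    have d1: "((\<lambda>r. Phi r \<sigma>) has_vector_derivative (A r ** Phi r \<sigma>)) (at r within {0..T})"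
      using Phi sig r unfolding state_transition_def by blast
    have d2: "((\<lambda>r. Phi r \<tau>) has_vector_derivative (A r ** Phi r \<tau>)) (at r within {0..T})"
      using Phi tau r unfolding state_transition_def by blast
    have d3: "((\<lambda>r. Phi r \<sigma> ** Phi \<sigma> \<tau>) has_vector_derivative ((A r ** Phi r \<sigma>) ** Phi \<sigma> \<tau>)) (at r within {0..T})"
      using bounded_linear.has_vector_derivative[OF bl_mm d1] .
    have "(Z has_vector_derivative ((A r ** Phi r \<sigma>) ** Phi \<sigma> \<tau> - A r ** Phi r \<tau>)) (at r within {0..T})"
      unfolding Z_def by (rule has_vector_derivative_diff[OF d3 d2])
    moreover have "(A r ** Phi r \<sigma>) ** Phi \<sigma> \<tau> - A r ** Phi r \<tau> = A r ** Z r"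
      unfolding Z_def mm_diff_ldistrib[symmetric] matrix_mul_assoc ..
    ultimately show "(Z has_vector_derivative (A r ** Z r)) (at r within {0..T})" by simp
  qed
  moreover have "Z \<sigma> = 0" using Phi sig tau unfolding Z_def state_transition_def by simp
  ultimately have "\<forall>r\<in>{0..T}. Z r = 0" using lin_ode_unique[OF Ac _ sig] by blast
  then show ?thesis using s unfolding Z_def by simp
qed
lemma bbl_mv: "bounded_bilinear (\<lambda>(M::real^'n^'m) (x::real^'n). M *v x)"
proof
  fix a a' :: "real^'n^'m" and b b' :: "real^'n" and r :: real
  show "(a + a') *v b = a *v b + a' *v b" by (simp add: matrix_vector_mult_add_rdistrib)
  show "a *v (b + b') = a *v b + a *v b'" by (simp add: matrix_vector_right_distrib)
  show "(r *\<^sub>R a) *v b = r *\<^sub>R (a *v b)"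
    by (simp add: matrix_vector_mult_def vec_eq_iff algebra_simps sum_distrib_left)
  show "a *v (r *\<^sub>R b) = r *\<^sub>R (a *v b)"
    by (simp add: matrix_vector_mult_def vec_eq_iff algebra_simps sum_distrib_left)
  show "\<exists>K. \<forall>a b. norm ((a::real^'n^'m) *v (b::real^'n)) \<le> norm a * norm b * K"
    using norm_mv by (metis mult.right_neutral)
qed

lemma Phi_T_cont:
  fixes A :: "real \<Rightarrow> real^'n^'n" and Phi :: "real \<Rightarrow> real \<Rightarrow> real^'n^'n"
  assumes Ac: "continuous_on {0..T} A" and Phi: "state_transition A T Phi"
  shows "continuous_on {0..T} (\<lambda>t. Phi T t)"
  unfolding continuous_on_iff
proof (intro ballI allI impI)
  fix t0 e :: real assume t0: "t0 \<in> {0..T}" and e: "e > 0"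
  define K where "K = norm (Phi T t0)"
  have K0: "K \<ge> 0" by (simp add: K_def)
  have "\<forall>s\<in>{0..T}. ((\<lambda>s. Phi s t0) has_vector_derivative (A s ** Phi s t0)) (at s within {0..T})"
    using Phi t0 unfolding state_transition_def by blast
  then have cont: "continuous_on {0..T} (\<lambda>s. Phi s t0)"
    by (meson continuous_on_eq_continuous_within has_vector_derivative_continuous)
  define e' where "e' = min (1/2) (e / (2*K+1))"
  have e': "e' > 0" using e K0 by (simp add: e'_def)
  obtain d where d: "d > 0" "\<forall>s\<in>{0..T}. dist s t0 < d \<longrightarrow> dist (Phi s t0) (Phi t0 t0) < e'"
    using cont t0 e' unfolding continuous_on_iff by blast
  have I: "Phi t0 t0 = mat 1" using Phi t0 unfolding state_transition_def by blast
  show "\<exists>d>0. \<forall>t\<in>{0..T}. dist t t0 < d \<longrightarrow> dist (Phi T t) (Phi T t0) < e"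
  proof (intro exI conjI ballI impI)
    show "d > 0" by fact
    fix t assume t: "t \<in> {0..T}" "dist t t0 < d"
    define E where "E = Phi t t0 - mat 1"
    have nE: "norm E < e'" using d t I by (simp add: E_def dist_norm)
    have TT: "T \<in> {0..T}" using t0 by auto
    have cc: "Phi T t ** Phi t t0 = Phi T t0" using cocycle[OF Ac Phi TT t(1) t0] .
    have eq: "Phi T t0 - Phi T t = Phi T t ** E"
      unfolding E_def mm_diff_ldistrib[symmetric] matrix_mul_rid cc ..
    have "norm (Phi T t) \<le> norm (Phi T t0) + norm (Phi T t - Phi T t0)"
      by (rule norm_triangle_sub)
    also have "\<dots> = norm (Phi T t0) + norm (Phi T t ** E)"
      by (simp add: norm_minus_commute eq[symmetric])
    also have "\<dots> \<le> K + norm (Phi T t) * norm E" unfolding K_def by (intro add_left_mono norm_mm)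
    also have "\<dots> \<le> K + norm (Phi T t) * (1/2)"
      using nE by (intro add_left_mono mult_left_mono) (auto simp: e'_def)
    finally have nP: "norm (Phi T t) \<le> 2 * K" by simp
    have "dist (Phi T t) (Phi T t0) = norm (Phi T t ** E)"
      by (simp add: dist_norm norm_minus_commute eq[symmetric])
    also have "\<dots> \<le> norm (Phi T t) * norm E" by (rule norm_mm)
    also have "\<dots> \<le> 2 * K * e'" using nP nE K0 by (intro mult_mono) auto
    also have "\<dots> \<le> 2 * K * (e / (2*K+1))" using K0 by (intro mult_left_mono) (auto simp: e'_def)
    also have "\<dots> < e" using K0 e by (simp add: field_simps)
    finally show "dist (Phi T t) (Phi T t0) < e" .
  qed
qed

lemma hull_repr:
  fixes f :: "nat \<Rightarrow> 'a::real_vector"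
  assumes I: "finite I" and y: "y \<in> convex hull (f ` I)"
  shows "\<exists>u. (\<forall>i\<in>I. 0 \<le> u i) \<and> sum u I = 1 \<and> y = (\<Sum>i\<in>I. u i *\<^sub>R f i)"
proof -
  obtain c where c: "\<forall>x\<in>f ` I. 0 \<le> c x" "sum c (f ` I) = 1" "(\<Sum>x\<in>f ` I. c x *\<^sub>R x) = y"
    using y convex_hull_finite[of "f ` I"] I by auto
  define g where "g = inv_into I f"
  define J where "J = g ` (f ` I)"
  have JI: "J \<subseteq> I" unfolding J_def g_def by (auto intro: inv_into_into)
  have ginj: "inj_on g (f ` I)" unfolding g_def by (rule inj_on_inv_into) simp
  have fg: "\<And>x. x \<in> f ` I \<Longrightarrow> f (g x) = x" unfolding g_def by (simp add: f_inv_into_f)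
  define u where "u i = (if i \<in> J then c (f i) else 0)" for i
  have s1: "(\<Sum>i\<in>I. u i *\<^sub>R f i) = (\<Sum>i\<in>J. c (f i) *\<^sub>R f i)"
    unfolding u_def using JI I by (auto intro!: sum.mono_neutral_cong_right)
  also have "\<dots> = (\<Sum>x\<in>f ` I. c (f (g x)) *\<^sub>R f (g x))"
    unfolding J_def using sum.reindex[OF ginj] by simp
  also have "\<dots> = y" using c fg by simp
  finally have e1: "y = (\<Sum>i\<in>I. u i *\<^sub>R f i)" by simp
  have "sum u I = (\<Sum>i\<in>J. c (f i))"
    unfolding u_def using JI I by (auto intro!: sum.mono_neutral_cong_right)
  also have "\<dots> = (\<Sum>x\<in>f ` I. c (f (g x)))"
    unfolding J_def using sum.reindex[OF ginj] by simp
  also have "\<dots> = 1" using c fg by simp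
  finally have e2: "sum u I = 1" .
  have "\<forall>i\<in>I. 0 \<le> u i" using c by (auto simp: u_def)
  then show ?thesis using e1 e2 by blast
qed

lemma hull_mem:
  fixes f :: "nat \<Rightarrow> 'a::real_vector"
  assumes "finite I" "\<forall>i\<in>I. 0 \<le> u i" "sum u I = 1"
  shows "(\<Sum>i\<in>I. u i *\<^sub>R f i) \<in> convex hull (f ` I)"
  using assms by (intro convex_sum) (auto intro: hull_inc)
lemma mv_sum_expand:
  fixes M :: "real^'n^'m" and P :: "nat \<Rightarrow> real^'n"
  shows "M *v (x - (\<Sum>i\<in>I. u i *\<^sub>R P i)) = M *v x - (\<Sum>i\<in>I. u i *\<^sub>R (M *v P i))"
proof -
  have l: "linear ((*v) M)" by simp
  show ?thesis
    by (simp add: linear_diff[OF l] linear_sum[OF l] linear_scale[OF l] matrix_vector_mult_diff_distrib)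
qed

lemma diff4: "(a::'a::ab_group_add) - c - (b - d) = (a - b) - (c - d)"
  by (simp add: algebra_simps)

lemma inf_hull_lip:
  fixes Ma Mb :: "real^'n^'m" and Pa Pb :: "nat \<Rightarrow> real^'n"
  assumes I: "finite I" "I \<noteq> {}"
  shows "(INF y\<in>convex hull (Pa`I). norm (Ma *v (xa - y)))
     \<le> (INF y\<in>convex hull (Pb`I). norm (Mb *v (xb - y)))
        + (norm (Ma *v xa - Mb *v xb) + (\<Sum>i\<in>I. norm (Ma *v Pa i - Mb *v Pb i)))"
proof -
  define G where "G = norm (Ma *v xa - Mb *v xb) + (\<Sum>i\<in>I. norm (Ma *v Pa i - Mb *v Pb i))"
  have ne: "convex hull (Pb`I) \<noteq> {}" using I by simp
  have "(INF y\<in>convex hull (Pa`I). norm (Ma *v (xa - y))) - G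
      \<le> (INF y\<in>convex hull (Pb`I). norm (Mb *v (xb - y)))"
  proof (rule cINF_greatest[OF ne])
    fix yb assume yb: "yb \<in> convex hull (Pb`I)"
    obtain u where u: "\<forall>i\<in>I. 0 \<le> u i" "sum u I = 1" "yb = (\<Sum>i\<in>I. u i *\<^sub>R Pb i)"
      using hull_repr[OF I(1) yb] by blast
    define ya where "ya = (\<Sum>i\<in>I. u i *\<^sub>R Pa i)"
    have ya: "ya \<in> convex hull (Pa`I)" unfolding ya_def using hull_mem[OF I(1) u(1,2)] .
    have "(INF y\<in>convex hull (Pa`I). norm (Ma *v (xa - y))) \<le> norm (Ma *v (xa - ya))"
    proof (rule cINF_lower[OF _ ya])
      show "bdd_below ((\<lambda>y. norm (Ma *v (xa - y))) ` (convex hull (Pa`I)))"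
        by (rule bdd_belowI[where m=0]) auto
    qed
    also have "\<dots> \<le> norm (Mb *v (xb - yb)) + G"
    proof -
      have u1: "\<forall>i\<in>I. u i \<le> 1"
      proof
        fix i assume "i \<in> I"
        then show "u i \<le> 1" using member_le_sum[of i I u] u I(1) by auto
      qed
      have eqn: "Ma *v (xa - ya) - Mb *v (xb - yb)
          = (Ma *v xa - Mb *v xb) - (\<Sum>i\<in>I. u i *\<^sub>R (Ma *v Pa i - Mb *v Pb i))"
        unfolding ya_def u(3) mv_sum_expand scaleR_diff_right sum_subtractf by (rule diff4)
      have "norm (Ma *v (xa - ya) - Mb *v (xb - yb))
          \<le> norm (Ma *v xa - Mb *v xb) + norm (\<Sum>i\<in>I. u i *\<^sub>R (Ma *v Pa i - Mb *v Pb i))"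
        unfolding eqn by (rule norm_triangle_ineq4)
      also have "norm (\<Sum>i\<in>I. u i *\<^sub>R (Ma *v Pa i - Mb *v Pb i)) \<le> (\<Sum>i\<in>I. norm (u i *\<^sub>R (Ma *v Pa i - Mb *v Pb i)))"
        by (rule norm_sum)
      also have "\<dots> \<le> (\<Sum>i\<in>I. norm (Ma *v Pa i - Mb *v Pb i))"
      proof (rule sum_mono)
        fix i assume i: "i \<in> I"
        have "norm (u i *\<^sub>R (Ma *v Pa i - Mb *v Pb i)) = u i * norm (Ma *v Pa i - Mb *v Pb i)"
          using u(1) i by simp
        also have "\<dots> \<le> 1 * norm (Ma *v Pa i - Mb *v Pb i)"
          using u1 i by (intro mult_right_mono) auto
        finally show "norm (u i *\<^sub>R (Ma *v Pa i - Mb *v Pb i)) \<le> norm (Ma *v Pa i - Mb *v Pb i)" by simp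
      qed
      finally have "norm (Ma *v (xa - ya) - Mb *v (xb - yb)) \<le> G" unfolding G_def by simp
      moreover have "norm (Ma *v (xa - ya)) \<le> norm (Mb *v (xb - yb)) + norm (Ma *v (xa - ya) - Mb *v (xb - yb))"
        by (rule norm_triangle_sub)
      ultimately show ?thesis by linarith
    qed
    finally show "(INF y\<in>convex hull (Pa`I). norm (Ma *v (xa - y))) - G \<le> norm (Mb *v (xb - yb))"
      by simp
  qed
  then show ?thesis unfolding G_def by simp
qed

lemma continuous_on_Min_fin:
  fixes f :: "nat \<Rightarrow> 'a::topological_space \<Rightarrow> real"
  assumes "finite K" "K \<noteq> {}" "\<forall>k\<in>K. continuous_on S (f k)"
  shows "continuous_on S (\<lambda>z. Min ((\<lambda>k. f k z) ` K))"
  using assms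
proof (induction K rule: finite_ne_induct)
  case (singleton x)
  then show ?case by simp
next
  case (insert x F)
  have "continuous_on S (\<lambda>z. min (f x z) (Min ((\<lambda>k. f k z) ` F)))"
    using insert by (intro continuous_on_min) auto
  then show ?case using insert by simp
qed


lemma supinf_mono:
  fixes F1 F2 :: "'a \<Rightarrow> 'b \<Rightarrow> real"
  assumes U: "U \<noteq> {}" and D: "D \<noteq> {}"
    and b1: "\<forall>u\<in>U. \<forall>d\<in>D. \<bar>F1 u d\<bar> \<le> R" and b2: "\<forall>u\<in>U. \<forall>d\<in>D. \<bar>F2 u d\<bar> \<le> R"
    and le: "\<forall>u\<in>U. \<forall>d\<in>D. F1 u d \<le> F2 u d + c"
  shows "(SUP u\<in>U. INF d\<in>D. F1 u d) \<le> (SUP u\<in>U. INF d\<in>D. F2 u d) + c"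
proof (rule cSUP_least[OF U])
  fix u assume u: "u \<in> U"
  obtain d0 where d0: "d0 \<in> D" using D by blast
  have bb1: "bdd_below ((\<lambda>d. F1 u d) ` D)" using b1 u by (intro bdd_belowI[where m="-R"]) force
  have bb2: "bdd_below ((\<lambda>d. F2 u d) ` D)" using b2 u by (intro bdd_belowI[where m="-R"]) force
  have "(INF d\<in>D. F1 u d) - c \<le> (INF d\<in>D. F2 u d)"
  proof (rule cINF_greatest[OF D])
    fix d assume d: "d \<in> D"
    have "(INF d\<in>D. F1 u d) \<le> F1 u d" by (rule cINF_lower[OF bb1 d])
    then show "(INF d\<in>D. F1 u d) - c \<le> F2 u d" using le u d by force
  qed
  moreover have "(INF d\<in>D. F2 u d) \<le> (SUP u\<in>U. INF d\<in>D. F2 u d)"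
  proof (rule cSUP_upper[OF u])
    show "bdd_above ((\<lambda>u. INF d\<in>D. F2 u d) ` U)"
    proof (rule bdd_aboveI[where M=R])
      fix y assume "y \<in> (\<lambda>u. INF d\<in>D. F2 u d) ` U"
      then obtain u' where u': "u' \<in> U" "y = (INF d\<in>D. F2 u' d)" by blast
      have "bdd_below ((\<lambda>d. F2 u' d) ` D)" using b2 u'(1) by (intro bdd_belowI[where m="-R"]) force
      then have "y \<le> F2 u' d0" using u' cINF_lower d0 by metis
      also have "\<dots> \<le> R" using b2 u'(1) d0 by force
      finally show "y \<le> R" .
    qed
  qed
  ultimately show "(INF d\<in>D. F1 u d) \<le> (SUP u\<in>U. INF d\<in>D. F2 u d) + c" by linarith
qed

lemma W_le_phi:
  fixes B :: "real \<Rightarrow> real^'m^'n" and E :: "real \<Rightarrow> real^'l^'n"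
  assumes D: "compact D" "D \<noteq> {}"
    and w: "w \<in> Wset B E U D r"
    and bnd: "\<forall>u\<in>U. \<forall>d\<in>D. \<bar>(-p) \<bullet> (B r *v u + E r *v d)\<bar> \<le> R"
  shows "(-p) \<bullet> w \<le> (SUP u\<in>U. INF d\<in>D. (-p) \<bullet> (B r *v u + E r *v d))"
proof -
  have "continuous_on D (\<lambda>d. (-p) \<bullet> (E r *v d))"
    by (intro continuous_intros linear_continuous_on) (simp add: bounded_linear_inner_right bounded_linearI' matrix_vector_right_distrib)
  then obtain ds where ds: "ds \<in> D" "\<forall>d\<in>D. (-p) \<bullet> (E r *v ds) \<le> (-p) \<bullet> (E r *v d)"
    using continuous_attains_inf[OF D] by blast
  have "w + (- (E r *v ds)) \<in> (\<lambda>u. B r *v u) ` U"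
    using w ds(1) unfolding Wset_def mink_diff_def by blast
  then obtain us where us: "us \<in> U" "w - E r *v ds = B r *v us" by auto
  have "(-p) \<bullet> w \<le> (INF d\<in>D. (-p) \<bullet> (B r *v us + E r *v d))"
  proof (rule cINF_greatest[OF D(2)])
    fix d assume d: "d \<in> D"
    have "(-p) \<bullet> (B r *v us + E r *v d) = (-p) \<bullet> w - (-p) \<bullet> (E r *v ds) + (-p) \<bullet> (E r *v d)"
      using us(2)[symmetric] by (simp add: inner_add_right inner_diff_right)
    then show "(-p) \<bullet> w \<le> (-p) \<bullet> (B r *v us + E r *v d)" using ds(2) d by simp
  qed
  also have "\<dots> \<le> (SUP u\<in>U. INF d\<in>D. (-p) \<bullet> (B r *v u + E r *v d))"
  proof (rule cSUP_upper[OF us(1)])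
    show "bdd_above ((\<lambda>u. INF d\<in>D. (-p) \<bullet> (B r *v u + E r *v d)) ` U)"
    proof (rule bdd_aboveI[where M=R])
      fix y assume "y \<in> (\<lambda>u. INF d\<in>D. (-p) \<bullet> (B r *v u + E r *v d)) ` U"
      then obtain u' where u': "u' \<in> U" "y = (INF d\<in>D. (-p) \<bullet> (B r *v u' + E r *v d))" by blast
      have "bdd_below ((\<lambda>d. (-p) \<bullet> (B r *v u' + E r *v d)) ` D)"
        using bnd u'(1) by (intro bdd_belowI[where m="-R"]) force
      then have "y \<le> (-p) \<bullet> (B r *v u' + E r *v ds)" using u' cINF_lower ds(1) by metis
      also have "\<dots> \<le> R" using bnd u'(1) ds(1) by force
      finally show "y \<le> R" .
    qed
  qed
  finally show ?thesis .
qed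


lemma int_piece:
  fixes f :: "real \<Rightarrow> 'a::banach"
  assumes "(f has_integral (X - y a)) {a..T}" "(f has_integral (X - y b)) {b..T}" "a \<le> b" "b \<le> T"
  shows "(f has_integral (y b - y a)) {a..b}"
proof -
  have fi: "f integrable_on {a..T}" using assms(1) by (rule has_integral_integrable)
  have sub: "{a..b} \<subseteq> {a..T}" using assms(4) by auto
  have "f integrable_on {a..b}" by (rule integrable_subinterval_real[OF fi sub])
  then obtain I where I: "(f has_integral I) {a..b}" by blast
  have "(f has_integral (I + (X - y b))) {a..T}"
    using has_integral_combine[OF assms(3,4) I assms(2)] .
  then have "I + (X - y b) = X - y a" using assms(1) has_integral_unique by blast
  then have "I = y b - y a" by (simp add: algebra_simps)
  then show ?thesis using I by simp
qed

lemma inner_bound: "\<bar>(-p) \<bullet> y\<bar> \<le> norm p * norm (y::'a::real_inner)"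
  using Cauchy_Schwarz_ineq2[of "-p" y] by simp

lemma compact_bound_mv:
  fixes B :: "real \<Rightarrow> real^'m^'n"
  assumes "continuous_on {0..T} B" "compact U"
  shows "\<exists>R>0. \<forall>r\<in>{0..T}. \<forall>u\<in>U. norm (B r *v u) \<le> R"
proof -
  have sub: "fst ` ({0..T} \<times> U) \<subseteq> {0..T}" by auto
  have c1: "continuous_on ({0..T} \<times> U) (\<lambda>z. B (fst z))"
    by (rule continuous_on_compose2[OF assms(1) continuous_on_fst[OF continuous_on_id] sub])
  have "continuous_on ({0..T} \<times> U) (\<lambda>z. B (fst z) *v snd z)"
    by (rule bounded_bilinear.continuous_on[OF bbl_mv c1 continuous_on_snd[OF continuous_on_id]])
  then have "compact ((\<lambda>z. B (fst z) *v snd z) ` ({0..T} \<times> U))"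
    by (rule compact_continuous_image[OF _ compact_Times[OF compact_Icc assms(2)]])
  then have "bounded ((\<lambda>z. B (fst z) *v snd z) ` ({0..T} \<times> U))" by (rule compact_imp_bounded)
  then obtain R where R: "R > 0" "\<forall>y\<in>(\<lambda>z. B (fst z) *v snd z) ` ({0..T} \<times> U). norm y \<le> R"
    unfolding bounded_pos by blast
  have "\<forall>r\<in>{0..T}. \<forall>u\<in>U. norm (B r *v u) \<le> R"
  proof (intro ballI)
    fix r u assume "r \<in> {0..T}" "u \<in> U"
    then have "B r *v u \<in> (\<lambda>z. B (fst z) *v snd z) ` ({0..T} \<times> U)"
      by (intro image_eqI[where x="(r, u)"]) auto
    then show "norm (B r *v u) \<le> R" using R(2) by blast
  qed
  then show ?thesis using R(1) by blast
qed

theorem lemma2: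
  fixes T :: real
    and A :: "real \<Rightarrow> real^'n^'n" and B :: "real \<Rightarrow> real^'m^'n" and E :: "real \<Rightarrow> real^'l^'n"
    and U :: "(real^'m) set" and D :: "(real^'l) set"
    and Phi :: "real \<Rightarrow> real \<Rightarrow> real^'n^'n"
    and g :: "real^'n \<Rightarrow> real" and Lg :: real and N :: nat
    and \<gamma> :: "nat \<Rightarrow> real" and nk :: "nat \<Rightarrow> nat"
    and xbar :: "nat \<Rightarrow> nat \<Rightarrow> real^'n"
    and \<omega> :: "nat \<Rightarrow> nat \<Rightarrow> real \<Rightarrow> real^'n"
    and \<xi> :: "nat \<Rightarrow> nat \<Rightarrow> real \<Rightarrow> real^'n"
    and v :: "real \<Rightarrow> real^'n \<Rightarrow> real"
  assumes T_pos: "T > 0"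
    and A_cont: "continuous_on {0..T} A" and B_cont: "continuous_on {0..T} B"
    and E_cont: "continuous_on {0..T} E"
    and U: "compact U" "convex U" "U \<noteq> {}"
    and D: "compact D" "convex D" "D \<noteq> {}"
    and Phi: "state_transition A T Phi"
    and W_ne: "\<forall>t\<in>{0..T}. Wset B E U D t \<noteq> {}"
    and g_cont: "continuous_on UNIV g" and Lg: "Lg \<ge> 0"
    and N: "N \<ge> 1"
    and gamma: "\<forall>k\<in>{1..N}. \<gamma> k \<in> range g"
    and nk: "\<forall>k\<in>{1..N}. nk k \<ge> 1"
    and xbar: "\<forall>k\<in>{1..N}. \<forall>i\<in>{1..nk k}. g (xbar i k) = \<gamma> k"
    and omega: "\<forall>k\<in>{1..N}. \<forall>i\<in>{1..nk k}. admissible (Wset B E U D) 0 T (\<omega> i k)"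
    and xi: "\<forall>k\<in>{1..N}. \<forall>i\<in>{1..nk k}. \<forall>t\<in>{0..T}.
               ((\<lambda>s. A s *v \<xi> i k s + \<omega> i k s) has_integral (xbar i k - \<xi> i k t)) {t..T}"
    and v_def: "\<And>t x. v t x = Min ((\<lambda>k. Lg * (INF y\<in>convex hull ((\<lambda>i. \<xi> i k t) ` {1..nk k}).
                                          norm (Phi T t *v (x - y))) + \<gamma> k) ` {1..N})"
  shows "continuous_on ({0..T} \<times> UNIV) (\<lambda>(t, x). v t x)
         \<and> visc_supersolution T (hamiltonian A B E U D) v"
proof -
  define h where "h k t x = (INF y\<in>convex hull ((\<lambda>i. \<xi> i k t) ` {1..nk k}). norm (Phi T t *v (x - y)))" for k t x
  define F where "F k t x = Lg * h k t x + \<gamma> k" for k t x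
  have vF: "v t x = Min ((\<lambda>k. F k t x) ` {1..N})" for t x by (simp add: v_def F_def h_def)
  have T0: "0 \<le> T" using T_pos by simp
  have Ne: "finite {1..N}" "{1..N} \<noteq> {}" using N by auto
  have xi_eq: "\<xi> i k t = xbar i k - integral {t..T} (\<lambda>s. A s *v \<xi> i k s + \<omega> i k s)"
    if "k \<in> {1..N}" "i \<in> {1..nk k}" "t \<in> {0..T}" for i k t
  proof -
    have "((\<lambda>s. A s *v \<xi> i k s + \<omega> i k s) has_integral (xbar i k - \<xi> i k t)) {t..T}"
      using xi that by blast
    then show ?thesis by (simp add: integral_unique)
  qed
  have xi_cont: "continuous_on {0..T} (\<xi> i k)" if "k \<in> {1..N}" "i \<in> {1..nk k}" for i k
  proof -
    have "((\<lambda>s. A s *v \<xi> i k s + \<omega> i k s) has_integral (xbar i k - \<xi> i k 0)) {0..T}"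
      using xi that T0 by auto
    then have "(\<lambda>s. A s *v \<xi> i k s + \<omega> i k s) integrable_on {0..T}"
      by (rule has_integral_integrable)
    then have "continuous_on {0..T} (\<lambda>t. xbar i k - integral {t..T} (\<lambda>s. A s *v \<xi> i k s + \<omega> i k s))"
      by (intro continuous_intros indefinite_integral_continuous_1')
    then show ?thesis using xi_eq[OF that] continuous_on_eq by (metis (no_types, lifting))
  qed
  have PhiT: "continuous_on {0..T} (\<lambda>t. Phi T t)" by (rule Phi_T_cont[OF A_cont Phi])
  define S where "S = {0..T} \<times> (UNIV :: (real^'n) set)"
  have cont_h: "continuous_on S (\<lambda>z. h k (fst z) (snd z))" if k: "k \<in> {1..N}" for k
    unfolding continuous_on_iff
  proof (intro ballI allI impI)
    fix z0 and e :: real assume z0: "z0 \<in> S" and e: "e > 0"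
    obtain t0 x0 where z0e: "z0 = (t0, x0)" by (cases z0)
    have t0: "t0 \<in> {0..T}" using z0 z0e by (simp add: S_def)
    define G where "G z = norm (Phi T (fst z) *v snd z - Phi T t0 *v x0)
        + (\<Sum>i\<in>{1..nk k}. norm (Phi T (fst z) *v \<xi> i k (fst z) - Phi T t0 *v \<xi> i k t0))" for z
    have fstS: "fst ` S \<subseteq> {0..T}" by (auto simp: S_def)
    have cPhi: "continuous_on S (\<lambda>z. Phi T (fst z))"
      using continuous_on_compose2[OF PhiT continuous_on_fst[OF continuous_on_id] fstS] .
    have cxi: "continuous_on S (\<lambda>z. \<xi> i k (fst z))" if "i \<in> {1..nk k}" for i
      using continuous_on_compose2[OF xi_cont[OF k that] continuous_on_fst[OF continuous_on_id] fstS] .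
    have c1: "continuous_on S (\<lambda>z. Phi T (fst z) *v snd z)"
      by (rule bounded_bilinear.continuous_on[OF bbl_mv cPhi continuous_on_snd[OF continuous_on_id]])
    have c2: "continuous_on S (\<lambda>z. Phi T (fst z) *v \<xi> i k (fst z))" if "i \<in> {1..nk k}" for i
      by (rule bounded_bilinear.continuous_on[OF bbl_mv cPhi cxi[OF that]])
    have cG: "continuous_on S G"
      unfolding G_def
    proof (rule continuous_on_add)
      show "continuous_on S (\<lambda>z. norm (Phi T (fst z) *v snd z - Phi T t0 *v x0))"
        by (rule continuous_on_norm[OF continuous_on_diff[OF c1 continuous_on_const]])
      show "continuous_on S (\<lambda>z. \<Sum>i\<in>{1..nk k}. norm (Phi T (fst z) *v \<xi> i k (fst z) - Phi T t0 *v \<xi> i k t0))"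
        by (rule continuous_on_sum, rule continuous_on_norm[OF continuous_on_diff[OF c2 continuous_on_const]])
    qed
    have G0: "G z0 = 0" by (simp add: G_def z0e)
    obtain d where d: "d > 0" "\<forall>z\<in>S. dist z z0 < d \<longrightarrow> dist (G z) (G z0) < e"
      using cG z0 e unfolding continuous_on_iff by blast
    have fin: "finite {1..nk k}" "{1..nk k} \<noteq> {}" using nk k by auto
    have hb: "\<bar>h k t x - h k t0 x0\<bar> \<le> G (t, x)" for t x
    proof -
      have 1: "h k t x \<le> h k t0 x0 + G (t, x)"
        unfolding h_def G_def
        using inf_hull_lip[OF fin, where Ma="Phi T t" and Pa="\<lambda>i. \<xi> i k t" and xa=x and Mb="Phi T t0" and Pb="\<lambda>i. \<xi> i k t0" and xb=x0]
        by simp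
      have 2: "h k t0 x0 \<le> h k t x + G (t, x)"
        unfolding h_def G_def
        using inf_hull_lip[OF fin, where Mb="Phi T t" and Pb="\<lambda>i. \<xi> i k t" and xb=x and Ma="Phi T t0" and Pa="\<lambda>i. \<xi> i k t0" and xa=x0]
        by (simp add: norm_minus_commute)
      show ?thesis using 1 2 by linarith
    qed
    show "\<exists>d>0. \<forall>z\<in>S. dist z z0 < d \<longrightarrow> dist (h k (fst z) (snd z)) (h k (fst z0) (snd z0)) < e"
    proof (intro exI[of _ d] conjI ballI impI)
      show "d > 0" by fact
      fix z assume z: "z \<in> S" "dist z z0 < d"
      have "G z < e" using d z G0 by (auto simp: dist_real_def)
      moreover have "\<bar>h k (fst z) (snd z) - h k t0 x0\<bar> \<le> G z" using hb[of "fst z" "snd z"] by simp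
      ultimately show "dist (h k (fst z) (snd z)) (h k (fst z0) (snd z0)) < e"
        by (simp add: dist_real_def z0e)
    qed
  qed
  have part1: "continuous_on ({0..T} \<times> UNIV) (\<lambda>(t, x). v t x)"
  proof -
    have cF: "\<forall>k\<in>{1..N}. continuous_on S (\<lambda>z. F k (fst z) (snd z))"
      unfolding F_def using cont_h by (intro ballI continuous_on_add continuous_on_mult_left continuous_on_const) auto
    have "continuous_on S (\<lambda>z. Min ((\<lambda>k. F k (fst z) (snd z)) ` {1..N}))"
      by (rule continuous_on_Min_fin[OF Ne cF])
    moreover have "(\<lambda>(t, x). v t x) = (\<lambda>z. Min ((\<lambda>k. F k (fst z) (snd z)) ` {1..N}))"
      by (simp add: fun_eq_iff vF)
    ultimately show ?thesis by (simp add: S_def)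
  qed
  have part2: "visc_supersolution T (hamiltonian A B E U D) v"
    unfolding visc_supersolution_def
  proof (intro allI impI, elim conjE)
    fix t0 :: real and x0 :: "real^'n" and q :: real and p :: "real^'n"
    assume t0pos: "0 < t0" and t0T: "t0 < T" and qp: "(q, p) \<in> subdiff v t0 x0"
    have t0: "t0 \<in> {0..T}" using t0pos t0T by simp
    have sd: "\<forall>\<epsilon>>0. \<exists>\<delta>>0. \<forall>t x. 0 < norm ((t, x) - (t0, x0)) \<and> norm ((t, x) - (t0, x0)) < \<delta> \<longrightarrow>
        v t x - v t0 x0 - (q * (t - t0) + p \<bullet> (x - x0)) \<ge> - \<epsilon> * norm ((t, x) - (t0, x0))"
      using qp unfolding subdiff_def by simp
    define H where "H = hamiltonian A B E U D t0 x0 p"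
    have "Min ((\<lambda>k. F k t0 x0) ` {1..N}) \<in> (\<lambda>k. F k t0 x0) ` {1..N}"
      by (rule Min_in) (use Ne in auto)
    then obtain k where k: "k \<in> {1..N}" "v t0 x0 = F k t0 x0"
      unfolding vF[symmetric] by blast
    have vle: "v t x \<le> F k t x" for t x
      using vF Ne k(1) by (simp add: Min_le)
    have fin: "finite {1..nk k}" "{1..nk k} \<noteq> {}" using nk k by auto
    define K0 where "K0 = convex hull ((\<lambda>i. \<xi> i k t0) ` {1..nk k})"
    have K0c: "compact K0" "K0 \<noteq> {}" using fin
      by (auto simp: K0_def intro!: finite_imp_compact_convex_hull)
    have "continuous_on K0 (\<lambda>y. x0 - y)" by (intro continuous_intros)
    then have "continuous_on K0 (\<lambda>y. Phi T t0 *v (x0 - y))"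
      by (rule bounded_linear.continuous_on[OF matrix_vector_mul_bounded_linear])
    then have "continuous_on K0 (\<lambda>y. norm (Phi T t0 *v (x0 - y)))"
      by (rule continuous_on_norm)
    then obtain ystar where ys: "ystar \<in> K0" "\<forall>y\<in>K0. norm (Phi T t0 *v (x0 - ystar)) \<le> norm (Phi T t0 *v (x0 - y))"
      using continuous_attains_inf[OF K0c] by blast
    have hk0: "h k t0 x0 = norm (Phi T t0 *v (x0 - ystar))"
    proof (rule antisym)
      show "h k t0 x0 \<le> norm (Phi T t0 *v (x0 - ystar))"
        unfolding h_def K0_def[symmetric]
        by (rule cINF_lower[OF _ ys(1)], rule bdd_belowI[where m=0]) auto
      show "norm (Phi T t0 *v (x0 - ystar)) \<le> h k t0 x0"
        unfolding h_def K0_def[symmetric] using ys K0c by (intro cINF_greatest) auto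
    qed
    obtain u where u: "\<forall>i\<in>{1..nk k}. 0 \<le> u i" "sum u {1..nk k} = 1"
        "ystar = (\<Sum>i\<in>{1..nk k}. u i *\<^sub>R \<xi> i k t0)"
      using hull_repr[OF fin(1) ys(1)[unfolded K0_def]] by blast
    define yt where "yt s = (\<Sum>i\<in>{1..nk k}. u i *\<^sub>R \<xi> i k s)" for s
    define c where "c = x0 - ystar"
    define xt where "xt s = yt s + Phi s t0 *v c" for s
    define wb where "wb r = (\<Sum>i\<in>{1..nk k}. u i *\<^sub>R \<omega> i k r)" for r
    have Phi00: "Phi t0 t0 = mat 1" using Phi t0 unfolding state_transition_def by blast
    have xt0: "xt t0 = x0" by (simp add: xt_def yt_def c_def u(3) Phi00)
    have vtraj: "v s (xt s) \<le> v t0 x0" if s: "s \<in> {0..T}" for s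
    proof -
      have yin: "yt s \<in> convex hull ((\<lambda>i. \<xi> i k s) ` {1..nk k})"
        unfolding yt_def using hull_mem[OF fin(1) u(1,2)] .
      have "h k s (xt s) \<le> norm (Phi T s *v (xt s - yt s))"
        unfolding h_def by (rule cINF_lower[OF _ yin], rule bdd_belowI[where m=0]) auto
      also have "Phi T s *v (xt s - yt s) = Phi T t0 *v c"
        using cocycle[OF A_cont Phi _ s t0] T0
        by (simp add: xt_def matrix_vector_mul_assoc)
      finally have "h k s (xt s) \<le> h k t0 x0" using hk0 by (simp add: c_def)
      then have "F k s (xt s) \<le> F k t0 x0" unfolding F_def using Lg by (simp add: mult_left_mono)
      then show ?thesis using vle[of s "xt s"] k(2) by simp
    qed
    have Phider: "((\<lambda>r. Phi r t0 *v c) has_vector_derivative (A r *v (Phi r t0 *v c))) (at r within {0..T})"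
      if r: "r \<in> {0..T}" for r
    proof -
      have "((\<lambda>r. Phi r t0) has_vector_derivative (A r ** Phi r t0)) (at r within {0..T})"
        using Phi t0 r unfolding state_transition_def by blast
      then have "((\<lambda>r. Phi r t0 *v c) has_vector_derivative ((A r ** Phi r t0) *v c)) (at r within {0..T})"
        by (rule bounded_linear.has_vector_derivative[OF bl_mv])
      then show ?thesis by (simp only: matrix_vector_mul_assoc)
    qed
    have xirep: "((\<lambda>r. A r *v \<xi> i k r + \<omega> i k r) has_integral (\<xi> i k s - \<xi> i k t0)) {t0..s}"
      if i: "i \<in> {1..nk k}" and s: "t0 \<le> s" "s \<le> T" for i s
    proof (rule int_piece[where X="xbar i k" and T=T])
      show "((\<lambda>r. A r *v \<xi> i k r + \<omega> i k r) has_integral xbar i k - \<xi> i k t0) {t0..T}"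
        using xi k(1) i t0 by blast
      show "((\<lambda>r. A r *v \<xi> i k r + \<omega> i k r) has_integral xbar i k - \<xi> i k s) {s..T}"
        using xi k(1) i s t0pos by auto
    qed (use s in auto)
    have xrep: "((\<lambda>r. A r *v xt r + wb r) has_integral (xt s - x0)) {t0..s}"
      if s: "t0 \<le> s" "s \<le> T" for s
    proof -
      have "((\<lambda>r. \<Sum>i\<in>{1..nk k}. u i *\<^sub>R (A r *v \<xi> i k r + \<omega> i k r)) has_integral
             (\<Sum>i\<in>{1..nk k}. u i *\<^sub>R (\<xi> i k s - \<xi> i k t0))) {t0..s}"
        by (intro has_integral_sum fin(1) ballI has_integral_cmul xirep s)
      moreover have "(\<lambda>r. \<Sum>i\<in>{1..nk k}. u i *\<^sub>R (A r *v \<xi> i k r + \<omega> i k r)) = (\<lambda>r. A r *v yt r + wb r)"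
      proof
        fix r
        have l: "linear ((*v) (A r))" by simp
        show "(\<Sum>i\<in>{1..nk k}. u i *\<^sub>R (A r *v \<xi> i k r + \<omega> i k r)) = A r *v yt r + wb r"
          unfolding yt_def wb_def scaleR_add_right sum.distrib linear_sum[OF l] linear_scale[OF l] ..
      qed
      moreover have "(\<Sum>i\<in>{1..nk k}. u i *\<^sub>R (\<xi> i k s - \<xi> i k t0)) = yt s - yt t0"
        unfolding yt_def scaleR_diff_right sum_subtractf ..
      ultimately have i1: "((\<lambda>r. A r *v yt r + wb r) has_integral (yt s - yt t0)) {t0..s}" by simp
      have "\<And>r. r \<in> {t0..s} \<Longrightarrow> ((\<lambda>r. Phi r t0 *v c) has_vector_derivative (A r *v (Phi r t0 *v c))) (at r within {t0..s})"
      proof -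
        fix r assume r: "r \<in> {t0..s}"
        then have "r \<in> {0..T}" using s t0pos by auto
        from has_vector_derivative_within_subset[OF Phider[OF this]]
        show "((\<lambda>r. Phi r t0 *v c) has_vector_derivative (A r *v (Phi r t0 *v c))) (at r within {t0..s})"
          using s t0pos by auto
      qed
      from fundamental_theorem_of_calculus[OF s(1) this]
      have i2: "((\<lambda>r. A r *v (Phi r t0 *v c)) has_integral (Phi s t0 *v c - c)) {t0..s}"
        by (simp add: Phi00)
      have "((\<lambda>r. (A r *v yt r + wb r) + A r *v (Phi r t0 *v c)) has_integral ((yt s - yt t0) + (Phi s t0 *v c - c))) {t0..s}"
        by (rule has_integral_add[OF i1 i2])
      moreover have "(\<lambda>r. (A r *v yt r + wb r) + A r *v (Phi r t0 *v c)) = (\<lambda>r. A r *v xt r + wb r)"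
        by (simp add: fun_eq_iff xt_def matrix_vector_right_distrib algebra_simps)
      moreover have "(yt s - yt t0) + (Phi s t0 *v c - c) = xt s - x0"
        by (simp add: xt_def c_def yt_def u(3))
      ultimately show ?thesis by simp
    qed
    obtain RB where RB: "RB > 0" "\<forall>r\<in>{0..T}. \<forall>u\<in>U. norm (B r *v u) \<le> RB"
      using compact_bound_mv[OF B_cont U(1)] by blast
    obtain RE where RE: "RE > 0" "\<forall>r\<in>{0..T}. \<forall>d\<in>D. norm (E r *v d) \<le> RE"
      using compact_bound_mv[OF E_cont D(1)] by blast
    obtain RU where RU: "RU > 0" "\<forall>u\<in>U. norm u \<le> RU"
      using compact_imp_bounded[OF U(1)] unfolding bounded_pos by blast
    obtain RD where RD: "RD > 0" "\<forall>d\<in>D. norm d \<le> RD"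
      using compact_imp_bounded[OF D(1)] unfolding bounded_pos by blast
    obtain d0 where d0: "d0 \<in> D" using D(3) by blast
    have Wb: "norm w \<le> RB + RE" if r: "r \<in> {0..T}" and w: "w \<in> Wset B E U D r" for r w
    proof -
      have "w + (- (E r *v d0)) \<in> (\<lambda>u. B r *v u) ` U"
        using w d0 unfolding Wset_def mink_diff_def by blast
      then obtain u0 where u0: "u0 \<in> U" "w - E r *v d0 = B r *v u0" by auto
      then have "w = B r *v u0 + E r *v d0" by (simp add: algebra_simps)
      then have "norm w \<le> norm (B r *v u0) + norm (E r *v d0)" by (simp add: norm_triangle_ineq)
      also have "\<dots> \<le> RB + RE" using RB RE r u0 d0 by (intro add_mono) auto
      finally show ?thesis .
    qed
    have om: "\<omega> i k r \<in> Wset B E U D r" if "i \<in> {1..nk k}" "r \<in> {0..T}" for i r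
      using omega k(1) that unfolding admissible_def by blast
    define R where "R = norm p * (norm (A t0 *v x0) + RB + RE)"
    have Fb: "\<bar>(-p) \<bullet> (B r *v u + E r *v d)\<bar> \<le> R" if "r \<in> {0..T}" "u \<in> U" "d \<in> D" for r u d
    proof -
      have "\<bar>(-p) \<bullet> (B r *v u + E r *v d)\<bar> \<le> norm p * norm (B r *v u + E r *v d)" by (rule inner_bound)
      also have "\<dots> \<le> norm p * (norm (B r *v u) + norm (E r *v d))"
        by (intro mult_left_mono norm_triangle_ineq) auto
      also have "\<dots> \<le> norm p * (norm (A t0 *v x0) + RB + RE)"
      proof (intro mult_left_mono)
        have "norm (B r *v u) \<le> RB" "norm (E r *v d) \<le> RE" using RB RE that by auto
        moreover have "0 \<le> norm (A t0 *v x0)" by simp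
        ultimately show "norm (B r *v u) + norm (E r *v d) \<le> norm (A t0 *v x0) + RB + RE" by linarith
      qed simp
      finally show ?thesis by (simp add: R_def)
    qed
    have Fb2: "\<bar>(-p) \<bullet> (A t0 *v x0 + B t0 *v u + E t0 *v d)\<bar> \<le> R" if "u \<in> U" "d \<in> D" for u d
    proof -
      have "\<bar>(-p) \<bullet> (A t0 *v x0 + B t0 *v u + E t0 *v d)\<bar> \<le> norm p * norm (A t0 *v x0 + B t0 *v u + E t0 *v d)"
        by (rule inner_bound)
      also have "\<dots> \<le> norm p * (norm (A t0 *v x0) + norm (B t0 *v u) + norm (E t0 *v d))"
        by (intro mult_left_mono) (auto intro: order_trans[OF norm_triangle_ineq] add_mono)
      also have "\<dots> \<le> norm p * (norm (A t0 *v x0) + RB + RE)"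
        using RB RE that t0 by (intro mult_left_mono add_mono) auto
      finally show ?thesis by (simp add: R_def)
    qed
    define \<phi> where "\<phi> r = (SUP u\<in>U. INF d\<in>D. (-p) \<bullet> (B r *v u + E r *v d))" for r
    have phiW: "(-p) \<bullet> w \<le> \<phi> r" if r: "r \<in> {0..T}" and w: "w \<in> Wset B E U D r" for r w
      unfolding \<phi>_def using W_le_phi[OF D(1) D(3) w] Fb r by blast
    have Hge: "(-p) \<bullet> (A t0 *v x0) + \<phi> t0 \<le> H"
    proof -
      have "\<phi> t0 \<le> H + (- ((-p) \<bullet> (A t0 *v x0)))"
        unfolding \<phi>_def H_def hamiltonian_def
      proof (rule supinf_mono[OF U(3) D(3)])
        show "\<forall>u\<in>U. \<forall>d\<in>D. \<bar>(-p) \<bullet> (B t0 *v u + E t0 *v d)\<bar> \<le> R" using Fb t0 by blast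
        show "\<forall>u\<in>U. \<forall>d\<in>D. \<bar>(-p) \<bullet> (A t0 *v x0 + B t0 *v u + E t0 *v d)\<bar> \<le> R" using Fb2 by blast
        show "\<forall>u\<in>U. \<forall>d\<in>D. (-p) \<bullet> (B t0 *v u + E t0 *v d)
            \<le> (-p) \<bullet> (A t0 *v x0 + B t0 *v u + E t0 *v d) + - ((-p) \<bullet> (A t0 *v x0))"
          by (simp add: inner_add_right)
      qed
      then show ?thesis by simp
    qed
    have phicont: "\<exists>\<delta>>0. \<forall>r\<in>{0..T}. dist r t0 < \<delta> \<longrightarrow> \<phi> r \<le> \<phi> t0 + \<eta>" if eta: "\<eta> > 0" for \<eta>
    proof -
      define \<eta>B where "\<eta>B = \<eta> / (2 * (norm p * RU + 1))"
      define \<eta>E where "\<eta>E = \<eta> / (2 * (norm p * RD + 1))"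
      have "norm p * RU \<ge> 0" "norm p * RD \<ge> 0" using RU RD by simp_all
      then have p1: "norm p * RU + 1 > 0" "norm p * RD + 1 > 0" by linarith+
      have pos: "\<eta>B > 0" "\<eta>E > 0" unfolding \<eta>B_def \<eta>E_def using eta p1 by simp_all
      obtain \<delta>B where dB: "\<delta>B > 0" "\<forall>r\<in>{0..T}. dist r t0 < \<delta>B \<longrightarrow> dist (B r) (B t0) < \<eta>B"
        using B_cont t0 pos(1) unfolding continuous_on_iff by blast
      obtain \<delta>E where dE: "\<delta>E > 0" "\<forall>r\<in>{0..T}. dist r t0 < \<delta>E \<longrightarrow> dist (E r) (E t0) < \<eta>E"
        using E_cont t0 pos(2) unfolding continuous_on_iff by blast
      have aB: "norm p * RU * \<eta>B \<le> \<eta> / 2"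
      proof -
        have "norm p * RU * \<eta>B = \<eta> / 2 * (norm p * RU / (norm p * RU + 1))"
          by (simp add: \<eta>B_def field_simps)
        also have "\<dots> \<le> \<eta> / 2 * 1" using eta p1 by (intro mult_left_mono) (simp_all add: divide_le_eq_1)
        finally show ?thesis by simp
      qed
      have aE: "norm p * RD * \<eta>E \<le> \<eta> / 2"
      proof -
        have "norm p * RD * \<eta>E = \<eta> / 2 * (norm p * RD / (norm p * RD + 1))"
          by (simp add: \<eta>E_def field_simps)
        also have "\<dots> \<le> \<eta> / 2 * 1" using eta p1 by (intro mult_left_mono) (simp_all add: divide_le_eq_1)
        finally show ?thesis by simp
      qed
      show ?thesis
      proof (intro exI[of _ "min \<delta>B \<delta>E"] conjI ballI impI)
        show "min \<delta>B \<delta>E > 0" using dB dE by simp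
        fix r assume r: "r \<in> {0..T}" "dist r t0 < min \<delta>B \<delta>E"
        have nB: "norm (B r - B t0) \<le> \<eta>B" using dB r by (auto simp: dist_norm)
        have nE: "norm (E r - E t0) \<le> \<eta>E" using dE r by (auto simp: dist_norm)
        show "\<phi> r \<le> \<phi> t0 + \<eta>"
          unfolding \<phi>_def
        proof (rule supinf_mono[OF U(3) D(3)])
          show "\<forall>u\<in>U. \<forall>d\<in>D. \<bar>(-p) \<bullet> (B r *v u + E r *v d)\<bar> \<le> R" using Fb r(1) by blast
          show "\<forall>u\<in>U. \<forall>d\<in>D. \<bar>(-p) \<bullet> (B t0 *v u + E t0 *v d)\<bar> \<le> R" using Fb t0 by blast
          show "\<forall>u\<in>U. \<forall>d\<in>D. (-p) \<bullet> (B r *v u + E r *v d) \<le> (-p) \<bullet> (B t0 *v u + E t0 *v d) + \<eta>"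
          proof (intro ballI)
            fix u d assume u: "u \<in> U" and d: "d \<in> D"
            have eq: "(-p) \<bullet> (B r *v u + E r *v d) - (-p) \<bullet> (B t0 *v u + E t0 *v d)
                = (-p) \<bullet> ((B r - B t0) *v u + (E r - E t0) *v d)"
              by (simp add: matrix_vector_mult_diff_rdistrib inner_add_right inner_diff_right)
            have "\<bar>(-p) \<bullet> ((B r - B t0) *v u + (E r - E t0) *v d)\<bar>
                \<le> norm p * norm ((B r - B t0) *v u + (E r - E t0) *v d)" by (rule inner_bound)
            also have "\<dots> \<le> norm p * (norm (B r - B t0) * norm u + norm (E r - E t0) * norm d)"
              by (intro mult_left_mono order_trans[OF norm_triangle_ineq] add_mono norm_mv) auto
            also have "\<dots> \<le> norm p * (\<eta>B * RU + \<eta>E * RD)"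
              using nB nE RU RD u d pos by (intro mult_left_mono add_mono mult_mono) auto
            also have "\<dots> = norm p * RU * \<eta>B + norm p * RD * \<eta>E" by (simp add: algebra_simps)
            also have "\<dots> \<le> \<eta>" using aB aE by linarith
            finally show "(-p) \<bullet> (B r *v u + E r *v d) \<le> (-p) \<bullet> (B t0 *v u + E t0 *v d) + \<eta>"
              using eq by linarith
          qed
        qed
      qed
    qed
    have Phic: "continuous_on {0..T} (\<lambda>r. Phi r t0 *v c)"
    proof (rule continuous_on_eq_continuous_within[THEN iffD2], intro ballI)
      fix r assume "r \<in> {0..T}"
      then show "continuous (at r within {0..T}) (\<lambda>r. Phi r t0 *v c)"
        by (rule has_vector_derivative_continuous[OF Phider])
    qed
    have ytc: "continuous_on {0..T} yt"
      unfolding yt_def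
    proof (rule continuous_on_sum)
      fix i assume i: "i \<in> {1..nk k}"
      show "continuous_on {0..T} (\<lambda>r. u i *\<^sub>R \<xi> i k r)"
        by (rule continuous_on_scaleR[OF continuous_on_const xi_cont[OF k(1) i]])
    qed
    have xtc: "continuous_on {0..T} xt"
      unfolding xt_def by (rule continuous_on_add[OF ytc Phic])
    have Axc: "continuous_on {0..T} (\<lambda>r. A r *v xt r)"
      by (rule bounded_bilinear.continuous_on[OF bbl_mv A_cont xtc])
    have "compact ((\<lambda>r. A r *v xt r) ` {0..T})"
      by (rule compact_continuous_image[OF Axc compact_Icc])
    then have "bounded ((\<lambda>r. A r *v xt r) ` {0..T})" by (rule compact_imp_bounded)
    then obtain C1 where C1: "C1 > 0" "\<forall>y\<in>(\<lambda>r. A r *v xt r) ` {0..T}. norm y \<le> C1"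
      unfolding bounded_pos by blast
    define C where "C = C1 + RB + RE"
    have C0: "C \<ge> 0" using C1 RB RE by (simp add: C_def)
    have wbb: "norm (wb r) \<le> RB + RE" if r: "r \<in> {0..T}" for r
    proof -
      have "norm (wb r) \<le> (\<Sum>i\<in>{1..nk k}. norm (u i *\<^sub>R \<omega> i k r))"
        unfolding wb_def by (rule norm_sum)
      also have "\<dots> \<le> (\<Sum>i\<in>{1..nk k}. u i * (RB + RE))"
      proof (rule sum_mono)
        fix i assume i: "i \<in> {1..nk k}"
        have "norm (u i *\<^sub>R \<omega> i k r) = u i * norm (\<omega> i k r)" using u(1) i by simp
        also have "\<dots> \<le> u i * (RB + RE)" using u(1) i Wb[OF r om[OF i r]] by (intro mult_left_mono) auto
        finally show "norm (u i *\<^sub>R \<omega> i k r) \<le> u i * (RB + RE)" .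
      qed
      also have "\<dots> = RB + RE" using u(2) by (simp add: sum_distrib_right[symmetric])
      finally show ?thesis .
    qed
    have intb: "norm (A r *v xt r + wb r) \<le> C" if r: "r \<in> {0..T}" for r
    proof -
      have "norm (A r *v xt r) \<le> C1" using C1 r by blast
      then have "norm (A r *v xt r) + norm (wb r) \<le> C" using wbb[OF r] by (simp add: C_def)
      moreover have "norm (A r *v xt r + wb r) \<le> norm (A r *v xt r) + norm (wb r)" by (rule norm_triangle_ineq)
      ultimately show ?thesis by linarith
    qed
    have pw: "(-p) \<bullet> wb r \<le> \<phi> r" if r: "r \<in> {0..T}" for r
    proof -
      have "(-p) \<bullet> wb r = (\<Sum>i\<in>{1..nk k}. u i * ((-p) \<bullet> \<omega> i k r))"
        unfolding wb_def by (simp add: inner_sum_right)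
      also have "\<dots> \<le> (\<Sum>i\<in>{1..nk k}. u i * \<phi> r)"
      proof (rule sum_mono)
        fix i assume i: "i \<in> {1..nk k}"
        show "u i * ((-p) \<bullet> \<omega> i k r) \<le> u i * \<phi> r"
          using u(1) i phiW[OF r om[OF i r]] by (intro mult_left_mono) auto
      qed
      also have "\<dots> = \<phi> r" using u(2) by (simp add: sum_distrib_right[symmetric])
      finally show ?thesis .
    qed
    have C1pos: "1 + C > 0" using C0 by linarith
    have qH: "q \<le> H"
    proof (rule field_le_epsilon)
      fix e :: real assume e: "0 < e"
      define \<epsilon> where "\<epsilon> = e / (2 * (1 + C))"
      define \<eta> where "\<eta> = e / 4"
      have epos: "\<epsilon> > 0" "\<eta> > 0" using e C1pos by (simp_all add: \<epsilon>_def \<eta>_def)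
      obtain \<delta>1 where d1: "\<delta>1 > 0" "\<forall>t x. 0 < norm ((t, x) - (t0, x0)) \<and> norm ((t, x) - (t0, x0)) < \<delta>1 \<longrightarrow>
          v t x - v t0 x0 - (q * (t - t0) + p \<bullet> (x - x0)) \<ge> - \<epsilon> * norm ((t, x) - (t0, x0))"
        using sd epos(1) by blast
      have gc: "continuous_on {0..T} (\<lambda>r. (-p) \<bullet> (A r *v xt r))"
        by (rule continuous_on_inner[OF continuous_on_const Axc])
      obtain \<delta>2 where d2: "\<delta>2 > 0" "\<forall>r\<in>{0..T}. dist r t0 < \<delta>2 \<longrightarrow> dist ((-p) \<bullet> (A r *v xt r)) ((-p) \<bullet> (A t0 *v xt t0)) < \<eta>"
        using gc t0 epos(2) unfolding continuous_on_iff by blast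
      obtain \<delta>3 where d3: "\<delta>3 > 0" "\<forall>r\<in>{0..T}. dist r t0 < \<delta>3 \<longrightarrow> \<phi> r \<le> \<phi> t0 + \<eta>"
        using phicont[OF epos(2)] by blast
      define hh where "hh = min (min (\<delta>1 / (2 * (1 + C))) (\<delta>2 / 2)) (min (\<delta>3 / 2) ((T - t0) / 2))"
      have hpos: "hh > 0" using d1(1) d2(1) d3(1) t0T C1pos by (simp add: hh_def)
      have hm: "hh \<le> \<delta>1 / (2 * (1 + C))" "hh \<le> \<delta>2 / 2" "hh \<le> \<delta>3 / 2" "hh \<le> (T - t0) / 2"
        unfolding hh_def
        by (rule min.coboundedI1[OF min.cobounded1], rule min.coboundedI1[OF min.cobounded2],
            rule min.coboundedI2[OF min.cobounded1], rule min.coboundedI2[OF min.cobounded2])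
      have hle: "hh \<le> \<delta>1 / (2 * (1 + C))" "hh < \<delta>2" "hh < \<delta>3" "hh < T - t0"
      proof -
        show "hh \<le> \<delta>1 / (2 * (1 + C))" using hm(1) .
        show "hh < \<delta>2" using hm(2) d2(1) by linarith
        show "hh < \<delta>3" using hm(3) d3(1) by linarith
        have "0 < T - t0" using t0T by simp
        moreover have "2 * hh \<le> T - t0" using hm(4) by simp
        ultimately show "hh < T - t0" using hpos by linarith
      qed
      define s where "s = t0 + hh"
      have s: "t0 \<le> s" "s \<le> T" using hpos hle by (simp_all add: s_def)
      have XR: "((\<lambda>r. A r *v xt r + wb r) has_integral (xt s - x0)) {t0..s}" by (rule xrep[OF s])
      have b1: "(-p) \<bullet> (A r *v xt r + wb r) \<le> H + 2 * \<eta>" if r: "r \<in> {t0..s}" for r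
      proof -
        have r0: "r \<in> {0..T}" using r s t0pos by auto
        have dr: "dist r t0 \<le> hh" using r by (simp add: dist_real_def s_def)
        have "dist ((-p) \<bullet> (A r *v xt r)) ((-p) \<bullet> (A t0 *v xt t0)) < \<eta>"
          using d2(2) r0 dr hle(2) by simp
        then have g1: "(-p) \<bullet> (A r *v xt r) \<le> (-p) \<bullet> (A t0 *v x0) + \<eta>"
          using xt0 by (simp add: dist_real_def)
        have "\<phi> r \<le> \<phi> t0 + \<eta>" using d3(2) r0 dr hle(3) by simp
        then have g2: "(-p) \<bullet> wb r \<le> \<phi> t0 + \<eta>" using pw[OF r0] by linarith
        have "(-p) \<bullet> (A r *v xt r + wb r) = (-p) \<bullet> (A r *v xt r) + (-p) \<bullet> wb r"
          by (rule inner_add_right)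
        then show ?thesis using g1 g2 Hge by linarith
      qed
      have I1: "((\<lambda>r. (-p) \<bullet> (A r *v xt r + wb r)) has_integral ((-p) \<bullet> (xt s - x0))) {t0..s}"
        using has_integral_linear[OF XR bounded_linear_inner_right[of "-p"]] by (simp add: o_def)
      have I2: "((\<lambda>r. H + 2 * \<eta>) has_integral ((s - t0) * (H + 2 * \<eta>))) {t0..s}"
        using has_integral_const_real[of "H + 2 * \<eta>" t0 s] s(1) by simp
      have L1: "(-p) \<bullet> (xt s - x0) \<le> (s - t0) * (H + 2 * \<eta>)"
        by (rule has_integral_le[OF I1 I2 b1])
      have XR': "((\<lambda>r. A r *v xt r + wb r) has_integral (xt s - x0)) (cbox t0 s)"
        using XR by simp
      have "norm (xt s - x0) \<le> C * measure lborel (cbox t0 s)"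
      proof (rule has_integral_bound[OF C0 XR'])
        fix r assume "r \<in> cbox t0 s"
        then have "r \<in> {0..T}" using s t0pos by auto
        then show "norm (A r *v xt r + wb r) \<le> C" by (rule intb)
      qed
      then have L2: "norm (xt s - x0) \<le> C * hh" using s(1) by (simp add: s_def)
      define Nn where "Nn = norm ((s, xt s) - (t0, x0))"
      have Neq: "Nn = norm (hh, xt s - x0)" by (simp add: Nn_def s_def)
      have Npos: "0 < Nn"
      proof -
        have "norm hh \<le> norm (hh, xt s - x0)" by (rule norm_fst_le)
        moreover have "norm hh = hh" using hpos by simp
        ultimately show ?thesis using hpos Neq by linarith
      qed
      have "Nn \<le> norm hh + norm (xt s - x0)" unfolding Neq by (rule norm_Pair_le)
      then have Nle: "Nn \<le> (1 + C) * hh" using L2 hpos by (simp add: algebra_simps)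
      have "(1 + C) * hh \<le> (1 + C) * (\<delta>1 / (2 * (1 + C)))"
        using hle(1) C1pos by (intro mult_left_mono) auto
      also have "\<dots> = \<delta>1 / 2" using C1pos by (simp add: field_simps)
      finally have Nlt: "Nn < \<delta>1" using Nle d1(1) by linarith
      have sub1: "v s (xt s) - v t0 x0 - (q * (s - t0) + p \<bullet> (xt s - x0)) \<ge> - \<epsilon> * Nn"
        using d1(2) Npos Nlt unfolding Nn_def by blast
      have vs: "v s (xt s) \<le> v t0 x0" using vtraj s t0pos by simp
      have st: "s - t0 = hh" by (simp add: s_def)
      have A1: "q * hh + p \<bullet> (xt s - x0) \<le> \<epsilon> * Nn" using sub1 vs st by simp
      have "\<epsilon> * Nn \<le> \<epsilon> * ((1 + C) * hh)" using Nle epos by (intro mult_left_mono) auto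
      also have "\<epsilon> * ((1 + C) * hh) = e / 2 * hh" using C1pos by (simp add: \<epsilon>_def field_simps)
      finally have A2: "\<epsilon> * Nn \<le> e / 2 * hh" .
      have A3: "- (p \<bullet> (xt s - x0)) \<le> hh * (H + e / 2)"
        using L1 st by (simp add: \<eta>_def)
      have "hh * (H + e / 2) = hh * H + e / 2 * hh" by (simp add: algebra_simps)
      then have "q * hh \<le> e / 2 * hh + (hh * H + e / 2 * hh)" using A1 A2 A3 by linarith
      also have "\<dots> = (H + e) * hh" by (simp add: algebra_simps)
      finally show "q \<le> H + e" using hpos by simp
    qed
    then show "0 \<le> - q + hamiltonian A B E U D t0 x0 p" using H_def by simp
  qed
  show ?thesis using part1 part2 by simp
qed

end
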